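(* Let $T$ be a nonempty tree. Then $\pi(T)=\nu(T)+1$. Equivalently, $T$ has nullity $m$ if and only if a minimal partition of $T$ into always solvable subtrees has exactly $m+1$ parts.
   Context: For a finite simple graph $G$ with vertex set $\{v_1,\dots,v_n\}$, the closed adjacency matrix $N(G)$ is the $n\times n$ matrix over $\mathbb{Z}_2$ whose $(i,j)$ entry is $1$ iff $i=j$ or $v_i$ is adjacent to $v_j$. The nullity is $\nu(G):=\dim\operatorname{Ker}(N(G))$ over $\mathbb{Z}_2$, and $G$ is always solvable if $\nu(G)=0$. A partition of a tree $T$ into always solvable subtrees is a set $\{T_1,\dots,T_k\}$ of subtrees (connected induced subgraphs) of $T$ whose vertex sets are pairwise disjoint with union $V(T)$, each $T_i$ being always solvable (such partitions exist, e.g. into single vertices, since $K_1$ is always solvable). $\pi(T)$ denotes the minimum cardinality $k$ of such a partition. *)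

theory Defs
  imports "HOL-Library.Z2" "Jordan_Normal_Form.Matrix_Kernel"
begin

text \<open>A finite simple graph is given by a finite vertex set V and an
  irreflexive symmetric adjacency relation E (only its restriction to V matters).
  Vertices are enumerated v_1,...,v_n in increasing order (needs linorder);
  the nullity does not depend on this choice.\<close>

definition simple_graph :: "'a set \<Rightarrow> ('a \<Rightarrow> 'a \<Rightarrow> bool) \<Rightarrow> bool" where
  "simple_graph V E \<longleftrightarrow> finite V \<and> (\<forall>x\<in>V. \<not> E x x) \<and> (\<forall>x\<in>V. \<forall>y\<in>V. E x y \<longrightarrow> E y x)"

definition closed_adj_matrix :: "'a::linorder set \<Rightarrow> ('a \<Rightarrow> 'a \<Rightarrow> bool) \<Rightarrow> bit mat" where
  "closed_adj_matrix V E =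
     (let vs = sorted_list_of_set V; n = length vs in
      mat n n (\<lambda>(i, j). if i = j \<or> E (vs ! i) (vs ! j) then 1 else 0))"

definition nullity :: "'a::linorder set \<Rightarrow> ('a \<Rightarrow> 'a \<Rightarrow> bool) \<Rightarrow> nat" where
  "nullity V E = kernel_dim (closed_adj_matrix V E)"

definition always_solvable :: "'a::linorder set \<Rightarrow> ('a \<Rightarrow> 'a \<Rightarrow> bool) \<Rightarrow> bool" where
  "always_solvable V E \<longleftrightarrow> nullity V E = 0"

definition connected_graph :: "'a set \<Rightarrow> ('a \<Rightarrow> 'a \<Rightarrow> bool) \<Rightarrow> bool" where
  "connected_graph S E \<longleftrightarrow> S \<noteq> {} \<and>
     (\<forall>x\<in>S. \<forall>y\<in>S. (\<lambda>u v. u \<in> S \<and> v \<in> S \<and> E u v)\<^sup>*\<^sup>* x y)"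

definition is_cycle :: "'a set \<Rightarrow> ('a \<Rightarrow> 'a \<Rightarrow> bool) \<Rightarrow> 'a list \<Rightarrow> bool" where
  "is_cycle S E xs \<longleftrightarrow> length xs \<ge> 3 \<and> distinct xs \<and> set xs \<subseteq> S \<and>
     (\<forall>i. Suc i < length xs \<longrightarrow> E (xs ! i) (xs ! Suc i)) \<and> E (last xs) (hd xs)"

definition tree :: "'a set \<Rightarrow> ('a \<Rightarrow> 'a \<Rightarrow> bool) \<Rightarrow> bool" where
  "tree S E \<longleftrightarrow> connected_graph S E \<and> \<not> (\<exists>xs. is_cycle S E xs)"

definition AS_partition :: "'a::linorder set \<Rightarrow> ('a \<Rightarrow> 'a \<Rightarrow> bool) \<Rightarrow> 'a set set \<Rightarrow> bool" where
  "AS_partition V E P \<longleftrightarrow> finite P \<and> \<Union>P = V \<and>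
     (\<forall>A\<in>P. \<forall>B\<in>P. A \<noteq> B \<longrightarrow> A \<inter> B = {}) \<and>
     (\<forall>A\<in>P. A \<subseteq> V \<and> connected_graph A E \<and> always_solvable A E)"

definition pi_partition :: "'a::linorder set \<Rightarrow> ('a \<Rightarrow> 'a \<Rightarrow> bool) \<Rightarrow> nat" where
  "pi_partition V E = (LEAST k. \<exists>P. AS_partition V E P \<and> card P = k)"

end

theory Submission
  imports Defs "HOL-Library.FuncSet" "HOL-Library.Transitive_Closure_Table"
begin


lemma bit_UNIV: "(UNIV::bit set) = {0,1}"
  by (auto intro: bit.exhaust)

lemma card_bit_UNIV: "card (UNIV::bit set) = 2"
  by (simp add: bit_UNIV)

lemma card_mat_kernel:
  fixes A :: "bit mat"
  assumes A: "A \<in> carrier_mat nr nc"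
  shows "card (mat_kernel A) = 2 ^ kernel_dim A"
proof -
  interpret K: kernel nr nc A by (unfold_locales, rule A)
  obtain B where fB: "finite B" and bB: "K.basis B" using kernel_basis_exists[OF A] by blast
  have dimB: "K.dim = card B" using K.Ker.dim_basis[OF fB bB] .
  have BC: "B \<subseteq> mat_kernel A" using bB unfolding K.Ker.basis_def by auto
  have crit: "\<forall>v. v \<in> mat_kernel A \<longrightarrow> (\<exists>! a. a \<in> B \<rightarrow>\<^sub>E (UNIV::bit set) \<and> K.lincomb a B = v)"
    using K.Ker.basis_criterion[OF fB BC] bB by simp
  have bij: "bij_betw (\<lambda>a. K.lincomb a B) (B \<rightarrow>\<^sub>E (UNIV::bit set)) (mat_kernel A)"
  proof (rule bij_betwI')
    fix a b assume "a \<in> B \<rightarrow>\<^sub>E (UNIV::bit set)" "b \<in> B \<rightarrow>\<^sub>E (UNIV::bit set)"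
    moreover have "K.lincomb a B \<in> mat_kernel A" using K.Ker.lincomb_closed[OF BC] by auto
    ultimately show "(K.lincomb a B = K.lincomb b B) = (a = b)" using crit by metis
  next
    fix a assume "a \<in> B \<rightarrow>\<^sub>E (UNIV::bit set)"
    show "K.lincomb a B \<in> mat_kernel A" using K.Ker.lincomb_closed[OF BC] by auto
  next
    fix v assume "v \<in> mat_kernel A"
    then show "\<exists>a \<in> B \<rightarrow>\<^sub>E (UNIV::bit set). v = K.lincomb a B" using crit by metis
  qed
  have "card (mat_kernel A) = card (B \<rightarrow>\<^sub>E (UNIV::bit set))" using bij_betw_same_card[OF bij] by simp
  also have "\<dots> = 2 ^ card B" by (simp add: card_funcsetE[OF fB] card_bit_UNIV)
  finally show ?thesis using dimB by simp
qed




declare add_bit_eq_xor[simp del] mult_bit_eq_and[simp del]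

definition nb :: "'a set \<Rightarrow> ('a \<Rightarrow> 'a \<Rightarrow> bool) \<Rightarrow> 'a \<Rightarrow> 'a set" where
  "nb S E a = {b\<in>S. b = a \<or> E a b}"

definition kerS :: "'a set \<Rightarrow> ('a \<Rightarrow> 'a \<Rightarrow> bool) \<Rightarrow> ('a \<Rightarrow> bit) set" where
  "kerS S E = {x. (\<forall>a. a \<notin> S \<longrightarrow> x a = 0) \<and> (\<forall>a\<in>S. sum x (nb S E a) = 0)}"

lemma mat_row:
  fixes S :: "'a::linorder set"
  assumes fS: "finite S" and i: "i < card S"
  defines "vs \<equiv> sorted_list_of_set S"
  shows "(closed_adj_matrix S E *\<^sub>v vec (card S) (\<lambda>j. x (vs!j))) $ i = sum x (nb S E (vs ! i))"
proof -
  have len: "length vs = card S" unfolding vs_def by simp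
  have dist: "distinct vs" unfolding vs_def by simp
  have setvs: "set vs = S" unfolding vs_def using fS by simp
  let ?P = "\<lambda>j. i = j \<or> E (vs ! i) (vs ! j)"
  have "(closed_adj_matrix S E *\<^sub>v vec (card S) (\<lambda>j. x (vs!j))) $ i
      = (\<Sum>j\<in>{0..<card S}. (if ?P j then 1 else 0) * x (vs!j))"
    using i unfolding closed_adj_matrix_def Let_def vs_def[symmetric] len
    by (simp add: mult_mat_vec_def scalar_prod_def row_def)
  also have "\<dots> = (\<Sum>j\<in>{j\<in>{0..<card S}. ?P j}. x (vs!j))"
  proof -
    have "(\<Sum>j\<in>{0..<card S}. (if ?P j then 1 else 0) * x (vs!j)) = (\<Sum>j\<in>{0..<card S}. if ?P j then x (vs!j) else 0)"
      by (rule sum.cong) auto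
    also have "\<dots> = (\<Sum>j\<in>{j\<in>{0..<card S}. ?P j}. x (vs!j))"
      using sum.inter_filter[of "{0..<card S}" "\<lambda>j. x (vs!j)" ?P] by simp
    finally show ?thesis .
  qed
  also have "\<dots> = sum x (nb S E (vs ! i))"
  proof (rule sum.reindex_cong[symmetric])
    show "inj_on ((!) vs) {j\<in>{0..<card S}. ?P j}"
      using dist len by (auto simp: inj_on_def nth_eq_iff_index_eq)
    show "nb S E (vs ! i) = (!) vs ` {j\<in>{0..<card S}. ?P j}"
    proof
      show "nb S E (vs ! i) \<subseteq> (!) vs ` {j\<in>{0..<card S}. ?P j}"
      proof
        fix b assume "b \<in> nb S E (vs ! i)"
        then have b: "b \<in> S" "b = vs ! i \<or> E (vs ! i) b" unfolding nb_def by auto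
        then obtain j where j: "j < card S" "vs ! j = b" using setvs len by (metis in_set_conv_nth)
        then have "?P j" using b dist len i by (auto simp: nth_eq_iff_index_eq)
        then show "b \<in> (!) vs ` {j\<in>{0..<card S}. ?P j}" using j by force
      qed
      show "(!) vs ` {j\<in>{0..<card S}. ?P j} \<subseteq> nb S E (vs ! i)"
        using setvs len unfolding nb_def by auto
    qed
  qed simp
  finally show ?thesis .
qed

lemma card_kerS:
  fixes S :: "'a::linorder set"
  assumes fS: "finite S"
  shows "card (kerS S E) = 2 ^ nullity S E"
proof -
  define vs where "vs = sorted_list_of_set S"
  define n where "n = card S"
  have len: "length vs = n" unfolding vs_def n_def by simp
  have dist: "distinct vs" unfolding vs_def by simp
  have setvs: "set vs = S" unfolding vs_def using fS by simp
  define M where "M = closed_adj_matrix S E"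
  have M: "M \<in> carrier_mat n n" unfolding M_def closed_adj_matrix_def Let_def vs_def[symmetric] len
    by simp
  define g where "g x = vec n (\<lambda>j. x (vs!j))" for x :: "'a \<Rightarrow> bit"
  have row: "(M *\<^sub>v g x) $ i = sum x (nb S E (vs ! i))" if "i < n" for x i
    using mat_row[OF fS, of i E x] that unfolding M_def g_def n_def vs_def by simp
  have ker_iff: "g x \<in> mat_kernel M \<longleftrightarrow> (\<forall>a\<in>S. sum x (nb S E a) = 0)" for x
  proof -
    have "g x \<in> mat_kernel M \<longleftrightarrow> M *\<^sub>v g x = 0\<^sub>v n"
      using M unfolding mat_kernel_def g_def by auto
    also have "\<dots> \<longleftrightarrow> (\<forall>i<n. sum x (nb S E (vs ! i)) = 0)"
      using M row by (auto simp: vec_eq_iff)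
    also have "\<dots> \<longleftrightarrow> (\<forall>a\<in>S. sum x (nb S E a) = 0)"
      using setvs len by (metis in_set_conv_nth)
    finally show ?thesis .
  qed
  have bij: "bij_betw g (kerS S E) (mat_kernel M)"
  proof (rule bij_betw_imageI)
    show "inj_on g (kerS S E)"
    proof
      fix x y assume x: "x \<in> kerS S E" and y: "y \<in> kerS S E" and eq: "g x = g y"
      show "x = y"
      proof
        fix a show "x a = y a"
        proof (cases "a \<in> S")
          case True
          then obtain j where "j < n" "vs ! j = a" using setvs len by (metis in_set_conv_nth)
          then show ?thesis using eq unfolding g_def by (metis index_vec)
        next
          case False then show ?thesis using x y unfolding kerS_def by auto
        qed
      qed
    qed
    show "g ` kerS S E = mat_kernel M"
    proof
      show "g ` kerS S E \<subseteq> mat_kernel M" using ker_iff unfolding kerS_def by auto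
      show "mat_kernel M \<subseteq> g ` kerS S E"
      proof
        fix v assume v: "v \<in> mat_kernel M"
        then have vc: "v \<in> carrier_vec n" using M mat_kernel_def by blast
        define x where "x a = (if a \<in> S then v $ (SOME j. j < n \<and> vs ! j = a) else 0)" for a
        have gx: "g x = v"
        proof
          show "dim_vec (g x) = dim_vec v" using vc unfolding g_def by simp
          fix i assume "i < dim_vec v"
          then have i: "i < n" using vc by simp
          have "(SOME j. j < n \<and> vs ! j = vs ! i) = i"
            using i dist len by (auto simp: nth_eq_iff_index_eq)
          then show "g x $ i = v $ i" using i setvs len unfolding g_def x_def by auto
        qed
        have "\<forall>a\<in>S. sum x (nb S E a) = 0" using ker_iff[of x] v gx by simp
        then have "x \<in> kerS S E" unfolding kerS_def x_def by auto
        then show "v \<in> g ` kerS S E" using gx by blast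
      qed
    qed
  qed
  have "card (kerS S E) = card (mat_kernel M)" using bij_betw_same_card[OF bij] .
  also have "\<dots> = 2 ^ kernel_dim M" using card_mat_kernel[OF M] .
  finally show ?thesis unfolding nullity_def M_def .
qed




lemma bit_add_self[simp]: "(a::bit) + a = 0"
  by (cases a) (simp_all flip: one_add_one)

lemma bit_add_eq0: "(a::bit) + b = 0 \<longleftrightarrow> a = b"
  by (cases a; cases b) (simp_all flip: one_add_one)


definition rs :: "'a set \<Rightarrow> ('a \<Rightarrow> bit) \<Rightarrow> 'a \<Rightarrow> bit" where
  "rs S x = (\<lambda>a. if a \<in> S then x a else 0)"

lemma finite_kerS: "finite (S::'a::linorder set) \<Longrightarrow> finite (kerS S E)"
  using card_kerS[of S E] by (metis card.infinite power_not_zero zero_neq_numeral)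

lemma nb_sub: "nb S E a \<subseteq> S" unfolding nb_def by auto

lemma finite_nb: "finite S \<Longrightarrow> finite (nb S E a)"
  using nb_sub finite_subset by metis

lemma sum_rs: "sum (rs S x) (nb S E a) = sum x (nb S E a)"
  by (rule sum.cong) (auto simp: rs_def nb_def)


lemma sum_nb_split:
  assumes fA: "finite A" and fB: "finite B" and dj: "A \<inter> B = {}" and a: "a \<in> A" and q: "q \<in> B"
    and cr: "\<forall>b\<in>B. E a b \<longleftrightarrow> (a = p \<and> b = q)"
  shows "sum x (nb (A \<union> B) E a) = sum x (nb A E a) + (if a = p then x q else 0)"
proof -
  have eq: "nb (A \<union> B) E a = nb A E a \<union> (if a = p then {q} else {})"
    using dj a q cr unfolding nb_def by auto
  have nq: "q \<notin> nb A E a" using dj q nb_sub[of A E a] by auto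
  show ?thesis
  proof (cases "a = p")
    case True
    then have "nb (A \<union> B) E a = insert q (nb A E a)" using eq by simp
    then show ?thesis using True nq finite_nb[OF fA] by (simp add: add.commute)
  next
    case False
    then show ?thesis using eq by simp
  qed
qed

lemma kerS_add: "x \<in> kerS S E \<Longrightarrow> y \<in> kerS S E \<Longrightarrow> (\<lambda>a. x a + y a) \<in> kerS S E"
  unfolding kerS_def by (simp add: sum.distrib)

lemma kerS_smult: "x \<in> kerS S E \<Longrightarrow> (\<lambda>a. c * x a) \<in> kerS S E"
  unfolding kerS_def by (simp add: sum_distrib_left[symmetric])


lemma sum_nb_all: "finite S \<Longrightarrow> sum f (nb S E a) = (\<Sum>b\<in>S. if b = a \<or> E a b then f b else 0)"
  unfolding nb_def by (rule sum.inter_filter)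

lemma kerS_orth:
  fixes y z :: "'a \<Rightarrow> bit"
  assumes fS: "finite S" and sym: "\<forall>a\<in>S. \<forall>b\<in>S. E a b \<longrightarrow> E b a"
    and y: "y \<in> kerS S E" and u: "u \<in> S"
    and z: "\<forall>a\<in>S. sum z (nb S E a) = (if a = u then 1 else 0)"
  shows "y u = 0"
proof -
  define adj where "adj a b \<longleftrightarrow> b = a \<or> E a b" for a b
  have adj_sym: "adj a b \<longleftrightarrow> adj b a" if "a \<in> S" "b \<in> S" for a b
    using sym that unfolding adj_def by blast
  have nbS: "sum f (nb S E a) = (\<Sum>b\<in>S. if adj a b then f b else 0)" for f a
    unfolding adj_def by (rule sum_nb_all[OF fS])
  have "(\<Sum>a\<in>S. y a * sum z (nb S E a)) = (\<Sum>a\<in>S. if a = u then y a else 0)"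
    using z by (intro sum.cong) auto
  also have "\<dots> = y u" using fS u by (simp add: sum.delta)
  finally have 1: "(\<Sum>a\<in>S. y a * sum z (nb S E a)) = y u" .
  have "(\<Sum>a\<in>S. y a * sum z (nb S E a)) = (\<Sum>a\<in>S. \<Sum>b\<in>S. if adj a b then y a * z b else 0)"
    unfolding nbS sum_distrib_left by (intro sum.cong refl) simp
  also have "\<dots> = (\<Sum>b\<in>S. \<Sum>a\<in>S. if adj a b then y a * z b else 0)"
    by (rule sum.swap)
  also have "\<dots> = (\<Sum>b\<in>S. \<Sum>a\<in>S. if adj b a then z b * y a else 0)"
    by (intro sum.cong refl) (auto simp: adj_sym mult.commute)
  also have "\<dots> = (\<Sum>b\<in>S. z b * sum y (nb S E b))"
    unfolding nbS sum_distrib_left by (intro sum.cong refl) simp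
  also have "\<dots> = 0" using y unfolding kerS_def by simp
  finally show ?thesis using 1 by simp
qed


locale esplit =
  fixes V1 V2 :: "'a::linorder set" and E :: "'a \<Rightarrow> 'a \<Rightarrow> bool" and u v :: 'a
  assumes f1: "finite V1" and f2: "finite V2" and dj: "V1 \<inter> V2 = {}"
    and u: "u \<in> V1" and v: "v \<in> V2"
    and cr1: "\<forall>a\<in>V1. \<forall>b\<in>V2. E a b \<longleftrightarrow> (a = u \<and> b = v)"
    and cr2: "\<forall>a\<in>V2. \<forall>b\<in>V1. E a b \<longleftrightarrow> (a = v \<and> b = u)"
    and sym: "\<forall>a\<in>V1 \<union> V2. \<forall>b\<in>V1 \<union> V2. E a b \<longrightarrow> E b a"
begin

lemma s1: "a \<in> V1 \<Longrightarrow> sum x (nb (V1 \<union> V2) E a) = sum x (nb V1 E a) + (if a = u then x v else 0)"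
  using sum_nb_split[OF f1 f2 dj _ v, of a E u x] cr1 by blast

lemma s2: "a \<in> V2 \<Longrightarrow> sum x (nb (V1 \<union> V2) E a) = sum x (nb V2 E a) + (if a = v then x u else 0)"
  using sum_nb_split[OF f2 f1 _ _ u, of a E v x] cr2 dj by (simp add: Un_commute Int_commute)

lemma sym1: "\<forall>a\<in>V1. \<forall>b\<in>V1. E a b \<longrightarrow> E b a" using sym by blast
lemma sym2: "\<forall>a\<in>V2. \<forall>b\<in>V2. E a b \<longrightarrow> E b a" using sym by blast

lemma fV: "finite (V1 \<union> V2)" using f1 f2 by simp

lemma zero_on:
  assumes "y \<in> kerS S E" "S \<inter> T = {}" shows "sum y (nb T E a) = 0"
proof (rule sum.neutral, rule ballI)
  fix b assume "b \<in> nb T E a"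
  then have "b \<notin> S" using assms(2) nb_sub[of T E a] by auto
  then show "y b = 0" using assms(1) unfolding kerS_def by simp
qed

lemma ext1:
  assumes y: "y \<in> kerS V1 E" and yu: "y u = 0" shows "y \<in> kerS (V1 \<union> V2) E"
  unfolding kerS_def
proof (intro CollectI conjI allI impI ballI)
  fix a assume "a \<notin> V1 \<union> V2" then show "y a = 0" using y unfolding kerS_def by simp
next
  have yv: "y v = 0" using y v dj unfolding kerS_def by auto
  fix a assume a: "a \<in> V1 \<union> V2"
  show "sum y (nb (V1 \<union> V2) E a) = 0"
  proof (cases "a \<in> V1")
    case True then show ?thesis using s1[of a y] y yv unfolding kerS_def by simp
  next
    case False
    then have "a \<in> V2" using a by simp
    then show ?thesis using s2[of a y] yu zero_on[OF y dj] by simp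
  qed
qed

lemma ext2:
  assumes y: "y \<in> kerS V2 E" and yv: "y v = 0" shows "y \<in> kerS (V1 \<union> V2) E"
  unfolding kerS_def
proof (intro CollectI conjI allI impI ballI)
  fix a assume "a \<notin> V1 \<union> V2" then show "y a = 0" using y unfolding kerS_def by simp
next
  have yu: "y u = 0" using y u dj unfolding kerS_def by auto
  have dj': "V2 \<inter> V1 = {}" using dj by auto
  fix a assume a: "a \<in> V1 \<union> V2"
  show "sum y (nb (V1 \<union> V2) E a) = 0"
  proof (cases "a \<in> V2")
    case True then show ?thesis using s2[of a y] y yu unfolding kerS_def by simp
  next
    case False
    then have "a \<in> V1" using a by simp
    then show ?thesis using s1[of a y] yv zero_on[OF y dj'] by simp
  qed
qed


lemma restr1:
  assumes x: "x \<in> kerS (V1 \<union> V2) E"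
  shows "\<forall>a\<in>V1. sum (rs V1 x) (nb V1 E a) = (if a = u then x v else 0)"
proof
  fix a assume a: "a \<in> V1"
  have "sum x (nb V1 E a) + (if a = u then x v else 0) = 0"
    using s1[OF a, of x] x a unfolding kerS_def by simp
  then show "sum (rs V1 x) (nb V1 E a) = (if a = u then x v else 0)"
    unfolding sum_rs bit_add_eq0 .
qed

lemma restr2:
  assumes x: "x \<in> kerS (V1 \<union> V2) E"
  shows "\<forall>a\<in>V2. sum (rs V2 x) (nb V2 E a) = (if a = v then x u else 0)"
proof
  fix a assume a: "a \<in> V2"
  have "sum x (nb V2 E a) + (if a = v then x u else 0) = 0"
    using s2[OF a, of x] x a unfolding kerS_def by simp
  then show "sum (rs V2 x) (nb V2 E a) = (if a = v then x u else 0)"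
    unfolding sum_rs bit_add_eq0 .
qed

lemma lower:
  assumes z: "z \<in> kerS (V1 \<union> V2) E" and zu: "z u = 1" and zv: "z v = 1"
  shows "2 * (card (kerS V1 E) * card (kerS V2 E)) \<le> card (kerS (V1 \<union> V2) E)"
proof -
  let ?K = "kerS (V1 \<union> V2) E" and ?K1 = "kerS V1 E" and ?K2 = "kerS V2 E"
  have y1u: "y u = 0" if y: "y \<in> ?K1" for y
    using kerS_orth[OF f1 sym1 y u, of "rs V1 z"] restr1[OF z] zv by simp
  have y2v: "y v = 0" if y: "y \<in> ?K2" for y
    using kerS_orth[OF f2 sym2 y v, of "rs V2 z"] restr2[OF z] zu by simp
  define f where "f = (\<lambda>(b::bit, y1::'a \<Rightarrow> bit, y2::'a \<Rightarrow> bit). (\<lambda>a. (y1 a + y2 a) + b * z a))"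
  have img: "f ` (UNIV \<times> ?K1 \<times> ?K2) \<subseteq> ?K"
  proof clarify
    fix b y1 y2 assume y1: "y1 \<in> ?K1" and y2: "y2 \<in> ?K2"
    have "(\<lambda>a. y1 a + y2 a) \<in> ?K"
      using kerS_add[OF ext1[OF y1 y1u[OF y1]] ext2[OF y2 y2v[OF y2]]] .
    from kerS_add[OF this kerS_smult[OF z, of b]]
    show "f (b, y1, y2) \<in> ?K" unfolding f_def by simp
  qed
  have inj: "inj_on f (UNIV \<times> ?K1 \<times> ?K2)"
  proof (rule inj_onI)
    fix p q assume p: "p \<in> UNIV \<times> ?K1 \<times> ?K2" and q: "q \<in> UNIV \<times> ?K1 \<times> ?K2" and eq0: "f p = f q"
    obtain b y1 y2 where pd: "p = (b, y1, y2)" by (cases p) auto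
    obtain b' y1' y2' where qd: "q = (b', y1', y2')" by (cases q) auto
    have y1: "y1 \<in> ?K1" and y2: "y2 \<in> ?K2" using p pd by auto
    have y1': "y1' \<in> ?K1" and y2': "y2' \<in> ?K2" using q qd by auto
    have eq: "f (b, y1, y2) = f (b', y1', y2')" using eq0 pd qd by simp
    have y2u: "y2 u = 0" "y2' u = 0" using y2 y2' u dj unfolding kerS_def by auto
    have "f (b, y1, y2) u = b" "f (b', y1', y2') u = b'"
      unfolding f_def using y1u[OF y1] y1u[OF y1'] y2u zu by simp_all
    then have bb: "b = b'" using eq by simp
    have e: "y1 a + y2 a = y1' a + y2' a" for a
    proof -
      have "(y1 a + y2 a) + b * z a = (y1' a + y2' a) + b * z a"
        using fun_cong[OF eq, of a] bb unfolding f_def by simp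
      then show ?thesis by simp
    qed
    have "y1 = y1'"
    proof
      fix a show "y1 a = y1' a"
      proof (cases "a \<in> V1")
        case True
        then have "y2 a = 0" "y2' a = 0" using y2 y2' dj unfolding kerS_def by auto
        then show ?thesis using e[of a] by simp
      next
        case False then show ?thesis using y1 y1' unfolding kerS_def by simp
      qed
    qed
    moreover have "y2 = y2'"
    proof
      fix a show "y2 a = y2' a"
      proof (cases "a \<in> V2")
        case True
        then have "y1 a = 0" "y1' a = 0" using y1 y1' dj unfolding kerS_def by auto
        then show ?thesis using e[of a] by simp
      next
        case False then show ?thesis using y2 y2' unfolding kerS_def by simp
      qed
    qed
    ultimately show "p = q" using bb pd qd by simp
  qed
  have "card ((UNIV::bit set) \<times> ?K1 \<times> ?K2) \<le> card ?K"
    using card_inj_on_le[OF inj img finite_kerS[OF fV]] .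
  then show ?thesis by (simp add: card_cartesian_product card_bit_UNIV)
qed


lemma upper:
  "card (kerS (V1 \<union> V2) E) \<le> 2 * (card (kerS V1 E) * card (kerS V2 E))"
proof -
  let ?K = "kerS (V1 \<union> V2) E" and ?K1 = "kerS V1 E" and ?K2 = "kerS V2 E"
  define H where "H = {x\<in>?K. x u = 0}"
  have fK: "finite ?K" using finite_kerS[OF fV] .
  have fH: "finite H" using fK unfolding H_def by simp
  have step1: "card ?K \<le> 2 * card H"
  proof (cases "\<exists>z\<in>?K. z u = 1")
    case True
    then obtain z where z: "z \<in> ?K" "z u = 1" by blast
    define g where "g x = (x u, (\<lambda>a. x a + x u * z a))" for x :: "'a \<Rightarrow> bit"
    have inj: "inj_on g ?K"
    proof (rule inj_onI)
      fix x y assume "g x = g y"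
      then have xu: "x u = y u" and e: "(\<lambda>a. x a + x u * z a) = (\<lambda>a. y a + y u * z a)"
        unfolding g_def by auto
      show "x = y"
      proof
        fix a have "x a + x u * z a = y a + x u * z a" using fun_cong[OF e, of a] xu by simp
        then show "x a = y a" by simp
      qed
    qed
    have img: "g ` ?K \<subseteq> (UNIV::bit set) \<times> H"
    proof (rule image_subsetI)
      fix x assume x: "x \<in> ?K"
      have "(\<lambda>a. x a + x u * z a) \<in> ?K" using kerS_add[OF x kerS_smult[OF z(1)]] .
      moreover have "x u + x u * z u = 0" using z(2) by simp
      ultimately show "g x \<in> UNIV \<times> H" unfolding g_def H_def by simp
    qed
    have "card ?K \<le> card ((UNIV::bit set) \<times> H)"
      using card_inj_on_le[OF inj img] fH by (simp add: bit_UNIV)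
    then show ?thesis by (simp add: card_cartesian_product card_bit_UNIV)
  next
    case False
    then have "?K = H" unfolding H_def by auto
    then show ?thesis by simp
  qed
  define W where "W w \<longleftrightarrow> (\<forall>a. a \<notin> V1 \<longrightarrow> w a = 0) \<and>
      (\<forall>a\<in>V1. sum w (nb V1 E a) = (if a = u then 1 else 0))" for w :: "'a \<Rightarrow> bit"
  define w1 where "w1 = (SOME w. W w)"
  define h where "h x = ((\<lambda>a. rs V1 x a + x v * w1 a), rs V2 x)" for x :: "'a \<Rightarrow> bit"
  have img: "h ` H \<subseteq> ?K1 \<times> ?K2"
  proof (rule image_subsetI)
    fix x assume "x \<in> H"
    then have x: "x \<in> ?K" and xu: "x u = 0" unfolding H_def by auto
    have r1: "\<forall>a\<in>V1. sum (rs V1 x) (nb V1 E a) = (if a = u then x v else 0)" using restr1[OF x] .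
    have r2: "\<forall>a\<in>V2. sum (rs V2 x) (nb V2 E a) = 0" using restr2[OF x] xu by simp
    have "rs V2 x \<in> ?K2" using r2 unfolding kerS_def rs_def by simp
    moreover have "(\<lambda>a. rs V1 x a + x v * w1 a) \<in> ?K1"
    proof (cases "x v = 1")
      case True
      then have "W (rs V1 x)" unfolding W_def using r1 by (simp add: rs_def)
      then have Ww: "W w1" unfolding w1_def by (rule someI[of W])
      show ?thesis unfolding kerS_def
      proof (intro CollectI conjI allI impI ballI)
        fix a assume "a \<notin> V1" then show "rs V1 x a + x v * w1 a = 0"
          using Ww unfolding W_def rs_def by simp
      next
        fix a assume a: "a \<in> V1"
        have "sum (\<lambda>a. rs V1 x a + x v * w1 a) (nb V1 E a)
            = sum (rs V1 x) (nb V1 E a) + x v * sum w1 (nb V1 E a)"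
          by (simp add: sum.distrib sum_distrib_left)
        also have "\<dots> = 0" using r1 Ww a True unfolding W_def by simp
        finally show "sum (\<lambda>a. rs V1 x a + x v * w1 a) (nb V1 E a) = 0" .
      qed
    next
      case False
      then have xv: "x v = 0" by simp
      show ?thesis unfolding kerS_def using r1 xv by (simp add: rs_def)
    qed
    ultimately show "h x \<in> ?K1 \<times> ?K2" unfolding h_def by simp
  qed
  have inj: "inj_on h H"
  proof (rule inj_onI)
    fix x y assume x: "x \<in> H" and y: "y \<in> H" and eq: "h x = h y"
    have e2: "rs V2 x = rs V2 y" using eq unfolding h_def by simp
    then have xv: "x v = y v" using fun_cong[OF e2, of v] v unfolding rs_def by simp
    have e1: "rs V1 x a = rs V1 y a" for a
    proof -
      have "rs V1 x a + x v * w1 a = rs V1 y a + x v * w1 a"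
        using eq xv unfolding h_def by (simp add: fun_eq_iff)
      then show ?thesis by simp
    qed
    show "x = y"
    proof
      fix a
      show "x a = y a"
      proof (cases "a \<in> V1")
        case True then show ?thesis using e1[of a] unfolding rs_def by simp
      next
        case F1: False
        show ?thesis
        proof (cases "a \<in> V2")
          case True then show ?thesis using fun_cong[OF e2, of a] unfolding rs_def by simp
        next
          case False
          then show ?thesis using F1 x y unfolding H_def kerS_def by simp
        qed
      qed
    qed
  qed
  have "card H \<le> card (?K1 \<times> ?K2)"
    using card_inj_on_le[OF inj img] finite_kerS[OF f1] finite_kerS[OF f2] by simp
  then have "card H \<le> card ?K1 * card ?K2" by (simp add: card_cartesian_product)
  then show ?thesis using step1 by simp
qed

end




definition RS :: "'a set \<Rightarrow> ('a \<Rightarrow> 'a \<Rightarrow> bool) \<Rightarrow> 'a \<Rightarrow> 'a \<Rightarrow> bool" where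
  "RS S E = (\<lambda>a b. a \<in> S \<and> b \<in> S \<and> E a b)"

lemma connected_graph_RS: "connected_graph S E \<longleftrightarrow> S \<noteq> {} \<and> (\<forall>x\<in>S. \<forall>y\<in>S. (RS S E)\<^sup>*\<^sup>* x y)"
  unfolding connected_graph_def RS_def by simp

lemma rtranclp_sym: assumes "\<And>a b. r a b \<Longrightarrow> r b a" and "r\<^sup>*\<^sup>* x y" shows "r\<^sup>*\<^sup>* y x"
  using assms(2)
proof (induct rule: rtranclp_induct)
  case base then show ?case by simp
next
  case (step y z) then show ?case using assms(1) by (meson converse_rtranclp_into_rtranclp)
qed

lemma is_cycle_mono: "is_cycle S E xs \<Longrightarrow> S \<subseteq> T \<Longrightarrow> is_cycle T E xs"
  unfolding is_cycle_def by auto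

lemma tree_sub: "tree V E \<Longrightarrow> S \<subseteq> V \<Longrightarrow> connected_graph S E \<Longrightarrow> tree S E"
  unfolding tree_def using is_cycle_mono by blast

lemma simple_sub: "simple_graph V E \<Longrightarrow> S \<subseteq> V \<Longrightarrow> simple_graph S E"
  unfolding simple_graph_def by (auto intro: finite_subset)

lemma walk_cross:
  assumes "r\<^sup>*\<^sup>* x y" "P x" "\<not> P y" shows "\<exists>a b. r a b \<and> P a \<and> \<not> P b"
  using assms by (induct rule: rtranclp_induct) auto

definition cutR :: "'a set \<Rightarrow> ('a \<Rightarrow> 'a \<Rightarrow> bool) \<Rightarrow> 'a \<Rightarrow> 'a \<Rightarrow> 'a \<Rightarrow> 'a \<Rightarrow> bool" where
  "cutR V E u v = (\<lambda>a b. a \<in> V \<and> b \<in> V \<and> E a b \<and> \<not> ((a = u \<and> b = v) \<or> (a = v \<and> b = u)))"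

definition side :: "'a set \<Rightarrow> ('a \<Rightarrow> 'a \<Rightarrow> bool) \<Rightarrow> 'a \<Rightarrow> 'a \<Rightarrow> 'a set" where
  "side V E u v = {a. (cutR V E u v)\<^sup>*\<^sup>* u a}"

locale tedge =
  fixes V :: "'a::linorder set" and E :: "'a \<Rightarrow> 'a \<Rightarrow> bool" and u v :: 'a
  assumes sg: "simple_graph V E" and tr: "tree V E" and uV: "u \<in> V" and vV: "v \<in> V" and uv: "E u v"
begin

definition "V1 = side V E u v"
definition "V2 = V - V1"

lemma fin: "finite V" using sg unfolding simple_graph_def by simp
lemma symE: "a \<in> V \<Longrightarrow> b \<in> V \<Longrightarrow> E a b \<Longrightarrow> E b a" using sg unfolding simple_graph_def by blast
lemma irr: "a \<in> V \<Longrightarrow> \<not> E a a" using sg unfolding simple_graph_def by blast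
lemma u_ne_v: "u \<noteq> v" using irr uV uv by blast
lemma vu: "E v u" using symE uV vV uv by blast

lemma u1: "u \<in> V1" unfolding V1_def side_def by simp

lemma V1_sub: "V1 \<subseteq> V"
proof
  fix a assume "a \<in> V1"
  then have "(cutR V E u v)\<^sup>*\<^sup>* u a" unfolding V1_def side_def by simp
  then show "a \<in> V" using uV by (induct rule: rtranclp_induct) (auto simp: cutR_def)
qed

lemma v_notin: "v \<notin> V1"
proof
  assume "v \<in> V1"
  then have "(cutR V E u v)\<^sup>*\<^sup>* u v" unfolding V1_def side_def by simp
  then obtain xs0 where "rtrancl_path (cutR V E u v) u xs0 v" using rtranclp_eq_rtrancl_path by metis
  then obtain xs where p: "rtrancl_path (cutR V E u v) u xs v" and d: "distinct (u # xs)"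
    using rtrancl_path_distinct by metis
  have ne: "xs \<noteq> []" using p u_ne_v by (cases rule: rtrancl_path.cases) auto
  have lastxs: "last xs = v" using rtrancl_path_last[OF p ne] .
  have steps: "cutR V E u v ((u # xs) ! i) (xs ! i)" if "i < length xs" for i
    using rtrancl_path_nth[OF p that] .
  have len: "length xs \<ge> 2"
  proof (rule ccontr)
    assume "\<not> length xs \<ge> 2"
    moreover have "length xs > 0" using ne by simp
    ultimately have "length xs = 1" by linarith
    then have "xs = [v]" using lastxs by (cases xs) auto
    then show False using steps[of 0] unfolding cutR_def by simp
  qed
  have inV: "set xs \<subseteq> V"
  proof
    fix z assume "z \<in> set xs"
    then obtain i where "i < length xs" "xs ! i = z" by (metis in_set_conv_nth)
    then show "z \<in> V" using steps[of i] unfolding cutR_def by auto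
  qed
  have "is_cycle V E (u # xs)"
    unfolding is_cycle_def
  proof (intro conjI allI impI)
    show "3 \<le> length (u # xs)" using len by simp
    show "distinct (u # xs)" using d .
    show "set (u # xs) \<subseteq> V" using inV uV by simp
    fix i assume "Suc i < length (u # xs)"
    then show "E ((u # xs) ! i) ((u # xs) ! Suc i)" using steps[of i] unfolding cutR_def by simp
  next
    show "E (last (u # xs)) (hd (u # xs))" using lastxs ne vu by simp
  qed
  then show False using tr unfolding tree_def by blast
qed

lemma v2: "v \<in> V2" unfolding V2_def using vV v_notin by simp

lemma cr1: "a \<in> V1 \<Longrightarrow> b \<in> V2 \<Longrightarrow> E a b \<longleftrightarrow> (a = u \<and> b = v)"
proof
  assume a: "a \<in> V1" and b: "b \<in> V2" and e: "E a b"
  show "a = u \<and> b = v"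
  proof (rule ccontr)
    assume ne: "\<not> (a = u \<and> b = v)"
    have "a \<noteq> v" using a v_notin by blast
    then have "cutR V E u v a b" using ne e a b V1_sub unfolding cutR_def V2_def by auto
    then have "b \<in> V1" using a unfolding V1_def side_def by (simp add: rtranclp.rtrancl_into_rtrancl)
    then show False using b unfolding V2_def by simp
  qed
next
  assume "a = u \<and> b = v" then show "E a b" using uv by simp
qed

lemma cr2: "a \<in> V2 \<Longrightarrow> b \<in> V1 \<Longrightarrow> E a b \<longleftrightarrow> (a = v \<and> b = u)"
  using cr1[of b a] symE V1_sub unfolding V2_def by blast

lemma conn1: "connected_graph V1 E"
proof -
  have walk: "(RS V1 E)\<^sup>*\<^sup>* u a" if "a \<in> V1" for a
  proof -
    have "(cutR V E u v)\<^sup>*\<^sup>* u a" using that unfolding V1_def side_def by simp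
    then show ?thesis
    proof (induct rule: rtranclp_induct)
      case base then show ?case by simp
    next
      case (step y z)
      then have "y \<in> V1" "z \<in> V1" unfolding V1_def side_def
        by (auto intro: rtranclp.rtrancl_into_rtrancl)
      then have "RS V1 E y z" using step(2) unfolding RS_def cutR_def by simp
      then show ?case using step(3) by simp
    qed
  qed
  have sy: "RS V1 E a b \<Longrightarrow> RS V1 E b a" for a b using symE V1_sub unfolding RS_def by blast
  show ?thesis unfolding connected_graph_RS
  proof (intro conjI ballI)
    show "V1 \<noteq> {}" using u1 by auto
    fix x y assume x: "x \<in> V1" and y: "y \<in> V1"
    have "(RS V1 E)\<^sup>*\<^sup>* x u" using rtranclp_sym[OF sy walk[OF x]] .
    then show "(RS V1 E)\<^sup>*\<^sup>* x y" using walk[OF y] by (rule rtranclp_trans)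
  qed
qed

lemma conn2: "connected_graph V2 E"
proof -
  have key: "(RS V E)\<^sup>*\<^sup>* x c \<Longrightarrow> c \<in> V1 \<Longrightarrow> x \<in> V2 \<Longrightarrow> (RS V2 E)\<^sup>*\<^sup>* x v" for x c
  proof (induct rule: converse_rtranclp_induct)
    case base then show ?case unfolding V2_def by simp
  next
    case (step x x')
    show ?case
    proof (cases "x' \<in> V1")
      case True
      then have "x = v" using cr2[OF step(5) True] step(1) unfolding RS_def by simp
      then show ?thesis by simp
    next
      case False
      then have "x' \<in> V2" using step(1) unfolding RS_def V2_def by simp
      then have "(RS V2 E)\<^sup>*\<^sup>* x' v" using step(3,4) by simp
      moreover have "RS V2 E x x'" using step(1,5) \<open>x' \<in> V2\<close> unfolding RS_def by simp
      ultimately show ?thesis by (meson converse_rtranclp_into_rtranclp)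
    qed
  qed
  have walk: "(RS V2 E)\<^sup>*\<^sup>* x v" if x: "x \<in> V2" for x
  proof -
    have "(RS V E)\<^sup>*\<^sup>* x u" using tr x uV unfolding tree_def connected_graph_RS V2_def by blast
    then show ?thesis using key u1 x by blast
  qed
  have sy: "RS V2 E a b \<Longrightarrow> RS V2 E b a" for a b using symE unfolding RS_def V2_def by blast
  show ?thesis unfolding connected_graph_RS
  proof (intro conjI ballI)
    show "V2 \<noteq> {}" using v2 by auto
    fix x y assume x: "x \<in> V2" and y: "y \<in> V2"
    have "(RS V2 E)\<^sup>*\<^sup>* v y" using rtranclp_sym[OF sy walk[OF y]] .
    then show "(RS V2 E)\<^sup>*\<^sup>* x y" using walk[OF x] by (rule rtranclp_trans[rotated])
  qed
qed

lemma V2_sub: "V2 \<subseteq> V" unfolding V2_def by auto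
lemma tree1: "tree V1 E" using tree_sub[OF tr V1_sub conn1] .
lemma tree2: "tree V2 E" using tree_sub[OF tr V2_sub conn2] .
lemma sg1: "simple_graph V1 E" using simple_sub[OF sg V1_sub] .
lemma sg2: "simple_graph V2 E" using simple_sub[OF sg V2_sub] .
lemma card1: "card V1 < card V"
proof -
  have "V1 \<noteq> V" using v_notin vV by blast
  then show ?thesis using V1_sub psubset_card_mono[OF fin] by blast
qed
lemma card2: "card V2 < card V"
proof -
  have "V2 \<noteq> V" using u1 uV unfolding V2_def by blast
  then show ?thesis using V2_sub psubset_card_mono[OF fin] by blast
qed
lemma union: "V1 \<union> V2 = V" using V1_sub unfolding V2_def by auto
lemma disj: "V1 \<inter> V2 = {}" unfolding V2_def by auto

lemma esplit: "esplit V1 V2 E u v"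
proof
  show "finite V1" using finite_subset[OF V1_sub fin] .
  show "finite V2" using finite_subset[OF V2_sub fin] .
  show "V1 \<inter> V2 = {}" using disj .
  show "u \<in> V1" using u1 .
  show "v \<in> V2" using v2 .
  show "\<forall>a\<in>V1. \<forall>b\<in>V2. E a b = (a = u \<and> b = v)" using cr1 by blast
  show "\<forall>a\<in>V2. \<forall>b\<in>V1. E a b = (a = v \<and> b = u)" using cr2 by blast
  show "\<forall>a\<in>V1 \<union> V2. \<forall>b\<in>V1 \<union> V2. E a b \<longrightarrow> E b a" using symE union by blast
qed

lemma part_side:
  assumes C: "connected_graph C E" "C \<subseteq> V" and nuv: "\<not> (u \<in> C \<and> v \<in> C)"
  shows "C \<subseteq> V1 \<or> C \<subseteq> V2"
proof (rule ccontr)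
  assume "\<not> (C \<subseteq> V1 \<or> C \<subseteq> V2)"
  then obtain c d where c: "c \<in> C" "c \<in> V1" and d: "d \<in> C" "d \<notin> V1" using C(2) unfolding V2_def by blast
  have "(RS C E)\<^sup>*\<^sup>* c d" using C(1) c d unfolding connected_graph_RS by blast
  then obtain a b where "RS C E a b" "a \<in> V1" "b \<notin> V1" using walk_cross[of "RS C E" c d "\<lambda>x. x \<in> V1"] c d by blast
  then have "a \<in> C" "b \<in> C" "a \<in> V1" "b \<in> V2" "E a b" using C(2) unfolding RS_def V2_def by auto
  then show False using cr1 nuv by blast
qed

end




lemma nullity_le:
  fixes V1 :: "'a::linorder set"
  assumes "esplit V1 V2 E u v"
  shows "nullity (V1 \<union> V2) E \<le> nullity V1 E + nullity V2 E + 1"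
proof -
  interpret esplit V1 V2 E u v by fact
  have "(2::nat) ^ nullity (V1 \<union> V2) E \<le> 2 * (2 ^ nullity V1 E * 2 ^ nullity V2 E)"
    using upper card_kerS[OF fV] card_kerS[OF f1] card_kerS[OF f2] by simp
  also have "\<dots> = 2 ^ (nullity V1 E + nullity V2 E + 1)" by (simp add: power_add)
  finally show ?thesis by (rule power_le_imp_le_exp[rotated]) simp
qed

lemma nullity_ge:
  fixes V1 :: "'a::linorder set"
  assumes "esplit V1 V2 E u v" and z: "z \<in> kerS (V1 \<union> V2) E" "z u = 1" "z v = 1"
  shows "nullity V1 E + nullity V2 E + 1 \<le> nullity (V1 \<union> V2) E"
proof -
  interpret esplit V1 V2 E u v by fact
  have "(2::nat) ^ (nullity V1 E + nullity V2 E + 1) = 2 * (2 ^ nullity V1 E * 2 ^ nullity V2 E)"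
    by (simp add: power_add)
  also have "\<dots> \<le> 2 ^ nullity (V1 \<union> V2) E"
    using lower[OF z] card_kerS[OF fV] card_kerS[OF f1] card_kerS[OF f2] by simp
  finally show ?thesis by (rule power_le_imp_le_exp[rotated]) simp
qed

lemma part_nonempty: "AS_partition V E P \<Longrightarrow> C \<in> P \<Longrightarrow> C \<noteq> {}"
  unfolding AS_partition_def connected_graph_def by blast

lemma part_lower:
  fixes V :: "'a::linorder set"
  assumes "simple_graph V E" "tree V E" "AS_partition V E P"
  shows "nullity V E + 1 \<le> card P"
  using assms
proof (induct "card V" arbitrary: V P rule: less_induct)
  case less
  have sg: "simple_graph V E" and tr: "tree V E" and ap: "AS_partition V E P" by fact+
  have Vne: "V \<noteq> {}" using tr unfolding tree_def connected_graph_def by simp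
  have fP: "finite P" and UP: "\<Union>P = V" and djP: "\<forall>A\<in>P. \<forall>B\<in>P. A \<noteq> B \<longrightarrow> A \<inter> B = {}"
    and pP: "\<forall>A\<in>P. A \<subseteq> V \<and> connected_graph A E \<and> always_solvable A E"
    using ap unfolding AS_partition_def by auto
  obtain A where A: "A \<in> P" using UP Vne by blast
  show ?case
  proof (cases "A = V")
    case True
    have "P = {A}"
    proof
      show "P \<subseteq> {A}"
      proof
        fix B assume B: "B \<in> P"
        show "B \<in> {A}"
        proof (rule ccontr)
          assume "B \<notin> {A}"
          then have "A \<inter> B = {}" using djP A B by auto
          then have "B = {}" using pP B True by auto
          then show False using part_nonempty[OF ap B] by simp
        qed
      qed
    qed (use A in simp)
    moreover have "nullity V E = 0" using pP A True unfolding always_solvable_def by auto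
    ultimately show ?thesis by simp
  next
    case False
    obtain d where d: "d \<in> V" "d \<notin> A" using False pP A by blast
    obtain c where c: "c \<in> A" using part_nonempty[OF ap A] by blast
    have cV: "c \<in> V" using c pP A by blast
    have "(RS V E)\<^sup>*\<^sup>* c d" using tr cV d unfolding tree_def connected_graph_RS by blast
    then obtain a b where ab: "RS V E a b" "a \<in> A" "b \<notin> A"
      using walk_cross[of "RS V E" c d "\<lambda>x. x \<in> A"] c d by blast
    have aV: "a \<in> V" and bV: "b \<in> V" and eab: "E a b" using ab unfolding RS_def by auto
    interpret T: tedge V E a b using sg tr aV bV eab by unfold_locales
    have side: "C \<subseteq> T.V1 \<or> C \<subseteq> T.V2" if C: "C \<in> P" for C
    proof (rule T.part_side)
      show "connected_graph C E" "C \<subseteq> V" using pP C by auto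
      show "\<not> (a \<in> C \<and> b \<in> C)"
      proof
        assume "a \<in> C \<and> b \<in> C"
        then have "C = A" using djP C A ab(2) by blast
        then show False using ab(3) \<open>a \<in> C \<and> b \<in> C\<close> by simp
      qed
    qed
    define P1 where "P1 = {C\<in>P. C \<subseteq> T.V1}"
    define P2 where "P2 = {C\<in>P. C \<subseteq> T.V2}"
    have PU: "P = P1 \<union> P2" using side unfolding P1_def P2_def by blast
    have PD: "P1 \<inter> P2 = {}"
    proof -
      { fix C assume "C \<in> P1" "C \<in> P2"
        then have "C = {}" "C \<in> P" using T.disj unfolding P1_def P2_def by auto
        then have False using part_nonempty[OF ap] by blast }
      then show ?thesis by blast
    qed
    have ap1: "AS_partition T.V1 E P1"
      unfolding AS_partition_def
    proof (intro conjI)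
      show "finite P1" using fP unfolding P1_def by simp
      show "\<Union>P1 = T.V1"
      proof
        show "\<Union>P1 \<subseteq> T.V1" unfolding P1_def by blast
        show "T.V1 \<subseteq> \<Union>P1"
        proof
          fix x assume x: "x \<in> T.V1"
          then obtain C where C: "C \<in> P" "x \<in> C" using UP T.V1_sub by blast
          have "\<not> C \<subseteq> T.V2" using x C T.disj by blast
          then show "x \<in> \<Union>P1" using side[OF C(1)] C unfolding P1_def by blast
        qed
      qed
      show "\<forall>A\<in>P1. \<forall>B\<in>P1. A \<noteq> B \<longrightarrow> A \<inter> B = {}" using djP unfolding P1_def by blast
      show "\<forall>A\<in>P1. A \<subseteq> T.V1 \<and> connected_graph A E \<and> always_solvable A E"
        using pP unfolding P1_def by blast
    qed
    have ap2: "AS_partition T.V2 E P2"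
      unfolding AS_partition_def
    proof (intro conjI)
      show "finite P2" using fP unfolding P2_def by simp
      show "\<Union>P2 = T.V2"
      proof
        show "\<Union>P2 \<subseteq> T.V2" unfolding P2_def by blast
        show "T.V2 \<subseteq> \<Union>P2"
        proof
          fix x assume x: "x \<in> T.V2"
          then obtain C where C: "C \<in> P" "x \<in> C" using UP T.V2_sub by blast
          have "\<not> C \<subseteq> T.V1" using x C T.disj by blast
          then show "x \<in> \<Union>P2" using side[OF C(1)] C unfolding P2_def by blast
        qed
      qed
      show "\<forall>A\<in>P2. \<forall>B\<in>P2. A \<noteq> B \<longrightarrow> A \<inter> B = {}" using djP unfolding P2_def by blast
      show "\<forall>A\<in>P2. A \<subseteq> T.V2 \<and> connected_graph A E \<and> always_solvable A E"
        using pP unfolding P2_def by blast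
    qed
    have IH1: "nullity T.V1 E + 1 \<le> card P1" using less(1)[OF T.card1 T.sg1 T.tree1 ap1] .
    have IH2: "nullity T.V2 E + 1 \<le> card P2" using less(1)[OF T.card2 T.sg2 T.tree2 ap2] .
    have "nullity V E \<le> nullity T.V1 E + nullity T.V2 E + 1"
      using nullity_le[OF T.esplit] T.union by simp
    moreover have "card P = card P1 + card P2"
      using PU PD fP card_Un_disjoint by (metis finite_Un)
    ultimately show ?thesis using IH1 IH2 by simp
  qed
qed

lemma part_upper:
  fixes V :: "'a::linorder set"
  assumes "simple_graph V E" "tree V E"
  shows "\<exists>P. AS_partition V E P \<and> card P \<le> nullity V E + 1"
  using assms
proof (induct "card V" arbitrary: V rule: less_induct)
  case less
  have sg: "simple_graph V E" and tr: "tree V E" by fact+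
  have fV: "finite V" using sg unfolding simple_graph_def by simp
  show ?case
  proof (cases "nullity V E = 0")
    case True
    have "AS_partition V E {V}"
      unfolding AS_partition_def always_solvable_def using tr True unfolding tree_def by simp
    then show ?thesis by (intro exI[of _ "{V}"]) simp
  next
    case False
    have "(2::nat) \<le> 2 ^ nullity V E" using False by (cases "nullity V E") auto
    then have c2: "card (kerS V E) \<ge> 2" using card_kerS[OF fV, of E] by simp
    have "\<exists>x\<in>kerS V E. x \<noteq> (\<lambda>_. 0)"
    proof (rule ccontr)
      assume "\<not> (\<exists>x\<in>kerS V E. x \<noteq> (\<lambda>_. 0))"
      then have "kerS V E \<subseteq> {\<lambda>_. 0}" by blast
      then have "card (kerS V E) \<le> card {\<lambda>_::'a. 0::bit}" by (rule card_mono[rotated]) simp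
      then show False using c2 by simp
    qed
    then obtain x where x: "x \<in> kerS V E" "x \<noteq> (\<lambda>_. 0)" by blast
    have "\<exists>a. x a = 1"
    proof (rule ccontr)
      assume "\<not> (\<exists>a. x a = 1)"
      then have "\<forall>a. x a = 0" by simp
      then have "x = (\<lambda>_. 0)" by (intro ext) simp
      then show False using x(2) by contradiction
    qed
    then obtain a where xa: "x a = 1" by blast
    have aV: "a \<in> V"
    proof (rule ccontr)
      assume "a \<notin> V" then have "x a = 0" using x(1) unfolding kerS_def by simp
      then show False using xa by simp
    qed
    have "\<exists>b. b \<in> V \<and> E a b \<and> x b = 1"
    proof (rule ccontr)
      assume nb0: "\<not> (\<exists>b. b \<in> V \<and> E a b \<and> x b = 1)"
      have "sum x (nb V E a) = sum x {a}"
      proof (rule sum.mono_neutral_right)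
        show "finite (nb V E a)" using finite_nb[OF fV] .
        show "{a} \<subseteq> nb V E a" using aV unfolding nb_def by simp
        show "\<forall>i\<in>nb V E a - {a}. x i = 0" using nb0 unfolding nb_def by auto
      qed
      then have "sum x (nb V E a) = 1" using xa by simp
      then show False using x aV unfolding kerS_def by simp
    qed
    then obtain b where b: "b \<in> V" "E a b" "x b = 1" by blast
    interpret T: tedge V E a b using sg tr aV b by unfold_locales
    obtain P1 where P1: "AS_partition T.V1 E P1" "card P1 \<le> nullity T.V1 E + 1"
      using less(1)[OF T.card1 T.sg1 T.tree1] by blast
    obtain P2 where P2: "AS_partition T.V2 E P2" "card P2 \<le> nullity T.V2 E + 1"
      using less(1)[OF T.card2 T.sg2 T.tree2] by blast
    have ge: "nullity T.V1 E + nullity T.V2 E + 1 \<le> nullity V E"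
      using nullity_ge[OF T.esplit, of x] x(1) xa b(3) T.union by simp
    note Q1 = P1(1)[unfolded AS_partition_def]
    note Q2 = P2(1)[unfolded AS_partition_def]
    have f1: "finite P1" using Q1 by (rule conjunct1)
    have f2: "finite P2" using Q2 by (rule conjunct1)
    have u1: "\<Union>P1 = T.V1" using Q1 by (rule conjunct2[THEN conjunct1])
    have u2: "\<Union>P2 = T.V2" using Q2 by (rule conjunct2[THEN conjunct1])
    have d1: "\<forall>A\<in>P1. \<forall>B\<in>P1. A \<noteq> B \<longrightarrow> A \<inter> B = {}" using Q1 by (rule conjunct2[THEN conjunct2, THEN conjunct1])
    have d2: "\<forall>A\<in>P2. \<forall>B\<in>P2. A \<noteq> B \<longrightarrow> A \<inter> B = {}" using Q2 by (rule conjunct2[THEN conjunct2, THEN conjunct1])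
    have p1: "\<forall>A\<in>P1. A \<subseteq> T.V1 \<and> connected_graph A E \<and> always_solvable A E" using Q1 by (rule conjunct2[THEN conjunct2, THEN conjunct2])
    have p2: "\<forall>A\<in>P2. A \<subseteq> T.V2 \<and> connected_graph A E \<and> always_solvable A E" using Q2 by (rule conjunct2[THEN conjunct2, THEN conjunct2])
    have ap: "AS_partition V E (P1 \<union> P2)"
      unfolding AS_partition_def
    proof (intro conjI)
      show "finite (P1 \<union> P2)" using f1 f2 by (rule finite_UnI)
      show "\<Union> (P1 \<union> P2) = V" using u1 u2 T.union by (simp only: Union_Un_distrib)
      show "\<forall>A\<in>P1 \<union> P2. A \<subseteq> V \<and> connected_graph A E \<and> always_solvable A E"
      proof
        fix A assume "A \<in> P1 \<union> P2"
        then show "A \<subseteq> V \<and> connected_graph A E \<and> always_solvable A E"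
        proof
          assume "A \<in> P1" then show ?thesis using p1 T.V1_sub by blast
        next
          assume "A \<in> P2" then show ?thesis using p2 T.V2_sub by blast
        qed
      qed
      show "\<forall>A\<in>P1 \<union> P2. \<forall>B\<in>P1 \<union> P2. A \<noteq> B \<longrightarrow> A \<inter> B = {}"
      proof (intro ballI impI)
        fix A B assume A: "A \<in> P1 \<union> P2" and B: "B \<in> P1 \<union> P2" and ne: "A \<noteq> B"
        have s1: "\<forall>C\<in>P1. C \<subseteq> T.V1" and s2: "\<forall>C\<in>P2. C \<subseteq> T.V2" using p1 p2 by auto
        show "A \<inter> B = {}"
        proof (cases "A \<in> P1")
          case A1: True
          show ?thesis
          proof (cases "B \<in> P1")
            case True then show ?thesis using d1 A1 ne by blast
          next
            case False then have "B \<in> P2" using B by blast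
            then show ?thesis using A1 s1 s2 T.disj by blast
          qed
        next
          case A2: False
          then have A2': "A \<in> P2" using A by blast
          show ?thesis
          proof (cases "B \<in> P2")
            case True then show ?thesis using d2 A2' ne by blast
          next
            case False then have "B \<in> P1" using B by blast
            then show ?thesis using A2' s1 s2 T.disj by blast
          qed
        qed
      qed
    qed
    have "card (P1 \<union> P2) \<le> card P1 + card P2" by (rule card_Un_le)
    then show ?thesis using ap P1(2) P2(2) ge by (intro exI[of _ "P1 \<union> P2"]) simp
  qed
qed

theorem theorem4p4:
  fixes V :: "'a::linorder set" and E :: "'a \<Rightarrow> 'a \<Rightarrow> bool"
  assumes "simple_graph V E" and "tree V E"
  shows "pi_partition V E = nullity V E + 1"
proof -
  obtain P where P: "AS_partition V E P" "card P \<le> nullity V E + 1"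
    using part_upper[OF assms] by blast
  have "card P = nullity V E + 1" using P part_lower[OF assms P(1)] by simp
  then have ex: "\<exists>P. AS_partition V E P \<and> card P = nullity V E + 1" using P(1) by blast
  show ?thesis unfolding pi_partition_def
  proof (rule Least_equality)
    show "\<exists>P. AS_partition V E P \<and> card P = nullity V E + 1" using ex .
    fix k assume "\<exists>P. AS_partition V E P \<and> card P = k"
    then show "nullity V E + 1 \<le> k" using part_lower[OF assms] by blast
  qed
qed


end
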